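(* Let $H=(V,\mathcal E)$ be a hypergraph with nonnegative hyperedge weights $w_e$ and total weight $W=\sum_{e\in\mathcal E}w_e$. Let $\epsilon\in(0,1)$ and suppose there is a vertex set $O\subseteq V$ with $|O|=r$ and $e(O)\ge (1-\epsilon)W$, where $e(S)=\sum_{e\in\mathcal E:\,e\subseteq S}w_e$. Let $(x^*,z^* )$ be an optimal solution of the linear program \[\min \sum_{v\in V}x_v \quad\text{s.t.}\quad z_e\le x_v\ \ \forall e\in\mathcal E,\ \forall v\in e;\qquad \sum_{e\in\mathcal E}w_e z_e\ge (1-\epsilon)W;\qquad 0\le x_v,z_e\le 1.\] For $\kappa>0$ let $K=\{v\in V: x^*_v\ge \kappa/(1+\kappa)\}$. Then \[W-e(K)\le (1+\kappa)\,\epsilon W\qquad\text{and}\qquad |K|\le \Bigl(1+\frac1\kappa\Bigr) r.\] *)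

theory Defs
  imports Complex_Main
begin

definition hypergraph :: "'v set \<Rightarrow> 'v set set \<Rightarrow> bool" where
  "hypergraph V E \<longleftrightarrow> finite V \<and> finite E \<and> (\<forall>e\<in>E. e \<subseteq> V)"

definition total_weight :: "'v set set \<Rightarrow> ('v set \<Rightarrow> real) \<Rightarrow> real" where
  "total_weight E w = (\<Sum>e\<in>E. w e)"

definition edge_weight_in :: "'v set set \<Rightarrow> ('v set \<Rightarrow> real) \<Rightarrow> 'v set \<Rightarrow> real" where
  "edge_weight_in E w S = (\<Sum>e\<in>{e\<in>E. e \<subseteq> S}. w e)"

definition lp_feasible ::
  "'v set \<Rightarrow> 'v set set \<Rightarrow> ('v set \<Rightarrow> real) \<Rightarrow> real \<Rightarrow> ('v \<Rightarrow> real) \<Rightarrow> ('v set \<Rightarrow> real) \<Rightarrow> bool" where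
  "lp_feasible V E w \<epsilon> x z \<longleftrightarrow>
     (\<forall>e\<in>E. \<forall>v\<in>e. z e \<le> x v) \<and>
     (\<Sum>e\<in>E. w e * z e) \<ge> (1 - \<epsilon>) * total_weight E w \<and>
     (\<forall>v\<in>V. 0 \<le> x v \<and> x v \<le> 1) \<and>
     (\<forall>e\<in>E. 0 \<le> z e \<and> z e \<le> 1)"

definition lp_optimal ::
  "'v set \<Rightarrow> 'v set set \<Rightarrow> ('v set \<Rightarrow> real) \<Rightarrow> real \<Rightarrow> ('v \<Rightarrow> real) \<Rightarrow> ('v set \<Rightarrow> real) \<Rightarrow> bool" where
  "lp_optimal V E w \<epsilon> x z \<longleftrightarrow> lp_feasible V E w \<epsilon> x z \<and>
     (\<forall>x' z'. lp_feasible V E w \<epsilon> x' z' \<longrightarrow> (\<Sum>v\<in>V. x v) \<le> (\<Sum>v\<in>V. x' v))"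

end

theory Submission
  imports Defs
begin

theorem theorem1:
  fixes V :: "'v set" and E :: "'v set set" and w :: "'v set \<Rightarrow> real"
    and \<epsilon> \<kappa> :: real and Opt :: "'v set" and r :: nat
    and x :: "'v \<Rightarrow> real" and z :: "'v set \<Rightarrow> real"
  assumes "hypergraph V E"
    and "\<forall>e\<in>E. 0 \<le> w e"
    and "0 < \<epsilon>" and "\<epsilon> < 1"
    and "Opt \<subseteq> V" and "card Opt = r"
    and "edge_weight_in E w Opt \<ge> (1 - \<epsilon>) * total_weight E w"
    and "lp_optimal V E w \<epsilon> x z"
    and "0 < \<kappa>"
  shows "total_weight E w - edge_weight_in E w {v\<in>V. x v \<ge> \<kappa> / (1 + \<kappa>)}
           \<le> (1 + \<kappa>) * \<epsilon> * total_weight E w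
       \<and> real (card {v\<in>V. x v \<ge> \<kappa> / (1 + \<kappa>)}) \<le> (1 + 1 / \<kappa>) * real r"
proof -
  define t where "t = \<kappa> / (1 + \<kappa>)"
  define K where "K = {v\<in>V. x v \<ge> t}"
  have fV: "finite V" and fE: "finite E" and sub: "\<forall>e\<in>E. e \<subseteq> V"
    using assms(1) unfolding hypergraph_def by auto
  have feas: "lp_feasible V E w \<epsilon> x z" and opt: "\<And>x' z'. lp_feasible V E w \<epsilon> x' z' \<Longrightarrow> (\<Sum>v\<in>V. x v) \<le> (\<Sum>v\<in>V. x' v)"
    using assms(8) unfolding lp_optimal_def by auto
  have zx: "\<forall>e\<in>E. \<forall>v\<in>e. z e \<le> x v" and zsum: "(\<Sum>e\<in>E. w e * z e) \<ge> (1 - \<epsilon>) * total_weight E w"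
    and x01: "\<forall>v\<in>V. 0 \<le> x v \<and> x v \<le> 1" and z01: "\<forall>e\<in>E. 0 \<le> z e \<and> z e \<le> 1"
    using feas unfolding lp_feasible_def by auto
  have t0: "0 < t" and t1: "t < 1" and t1k: "1 - t = 1 / (1 + \<kappa>)"
    using assms(9) unfolding t_def by (auto simp: field_simps)
  define EK where "EK = {e\<in>E. e \<subseteq> K}"
  define EN where "EN = E - EK"
  have fEK: "finite EK" and fEN: "finite EN" using fE unfolding EK_def EN_def by auto
  have disj: "EK \<inter> EN = {}" and un: "EK \<union> EN = E" unfolding EK_def EN_def by auto
  have W: "total_weight E w = sum w EK + sum w EN"
    unfolding total_weight_def using sum.union_disjoint[OF fEK fEN disj, of w] un by simp
  have eK: "edge_weight_in E w K = sum w EK" unfolding edge_weight_in_def EK_def by simp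
  have zN: "z e \<le> t" if "e \<in> EN" for e
  proof -
    from that obtain v where v: "v \<in> e" "v \<notin> K" "e \<in> E" unfolding EN_def EK_def by auto
    then have "v \<in> V" using sub by auto
    with v have "x v < t" unfolding K_def by auto
    with zx v show ?thesis by force
  qed
  have s1: "(\<Sum>e\<in>EK. w e * z e) \<le> sum w EK"
    by (rule sum_mono) (use assms(2) z01 in \<open>auto simp: EK_def intro: mult_left_le\<close>)
  have s2: "(\<Sum>e\<in>EN. w e * z e) \<le> (\<Sum>e\<in>EN. w e * t)"
    by (rule sum_mono) (use assms(2) zN in \<open>auto simp: EN_def intro: mult_left_mono\<close>)
  have "(\<Sum>e\<in>E. w e * z e) = (\<Sum>e\<in>EK. w e * z e) + (\<Sum>e\<in>EN. w e * z e)"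
    using sum.union_disjoint[OF fEK fEN disj] un by simp
  also have "\<dots> \<le> sum w EK + t * sum w EN" using s1 s2 by (simp add: sum_distrib_left mult.commute)
  finally have A: "(1 - \<epsilon>) * (sum w EK + sum w EN) \<le> sum w EK + t * sum w EN" using zsum W by simp
  have B: "(1 - t) * sum w EN \<le> \<epsilon> * (sum w EK + sum w EN)" using A by (simp add: algebra_simps)
  have "sum w EN \<le> (1 + \<kappa>) * (\<epsilon> * (sum w EK + sum w EN))"
    using B t1k assms(9) by (simp add: field_simps)
  then have P1: "total_weight E w - edge_weight_in E w K \<le> (1 + \<kappa>) * \<epsilon> * total_weight E w"
    using W eK by (simp add: algebra_simps)
  define xo where "xo = (\<lambda>v. if v \<in> Opt then (1::real) else 0)"
  define zo where "zo = (\<lambda>e. if e \<subseteq> Opt then (1::real) else 0)"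
  have "(\<Sum>e\<in>E. w e * zo e) = edge_weight_in E w Opt"
    unfolding edge_weight_in_def zo_def by (simp add: sum.inter_filter[OF fE, symmetric] if_distrib cong: if_cong)
  then have "lp_feasible V E w \<epsilon> xo zo"
    using assms(7) unfolding lp_feasible_def xo_def zo_def by auto
  then have "(\<Sum>v\<in>V. x v) \<le> (\<Sum>v\<in>V. xo v)" by (rule opt)
  also have "(\<Sum>v\<in>V. xo v) = real r"
    unfolding xo_def using assms(6) by (simp add: sum.If_cases[OF fV] Int_absorb1[OF assms(5)])
  finally have sx: "(\<Sum>v\<in>V. x v) \<le> real r" .
  have fK: "finite K" and KV: "K \<subseteq> V" using fV unfolding K_def by auto
  have "real (card K) * t = (\<Sum>v\<in>K. t)" by simp
  also have "\<dots> \<le> (\<Sum>v\<in>K. x v)" by (rule sum_mono) (simp add: K_def)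
  also have "\<dots> \<le> (\<Sum>v\<in>V. x v)" by (rule sum_mono2[OF fV KV]) (use x01 in auto)
  finally have "real (card K) * t \<le> real r" using sx by linarith
  then have "real (card K) \<le> real r / t" using t0 by (simp add: field_simps)
  also have "real r / t = (1 + 1 / \<kappa>) * real r" unfolding t_def using assms(9) by (simp add: field_simps)
  finally show ?thesis using P1 unfolding K_def t_def by simp
qed

end
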